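(* Let $(E\to M,\rho,\langle\cdot,\cdot\rangle,\circ)$ be a Courant algebroid and $(\mathbf I,\mathbf J,\mathbf K)$ an almost hypercomplex structure on $E$. There exists a hypercomplex connection $\nabla$ satisfying $\nabla\mathbf I=\nabla\mathbf J=\nabla\mathbf K=0$ and $$T(X,Y)=\mathbf ID\langle X,\mathbf IY\rangle+\mathbf JD\langle X,\mathbf JY\rangle+\mathbf KD\langle X,\mathbf KY\rangle\quad\text{for all }X,Y\in\Gamma(E)$$ if and only if $N_{\mathbf I,\mathbf J}=0$. In that case this connection coincides with each of the three hypercomplex connections $$\nabla_XY=-\tfrac12\mathbf K\big(\mathbf JY\circ\mathbf IX-\mathbf J(Y\circ\mathbf IX)-\mathbf I(\mathbf JY\circ X)+\mathbf J\mathbf I(Y\circ X)\big),$$ $$\nabla'_XY=-\tfrac12\mathbf I\big(\mathbf KY\circ\mathbf JX-\mathbf K(Y\circ\mathbf JX)-\mathbf J(\mathbf KY\circ X)+\mathbf K\mathbf J(Y\circ X)\big),$$ $$\nabla''_XY=-\tfrac12\mathbf J\big(\mathbf IY\circ\mathbf KX-\mathbf I(Y\circ\mathbf KX)-\mathbf K(\mathbf IY\circ X)+\mathbf I\mathbf K(Y\circ X)\big).$$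
   Context: A Courant algebroid $(E\to M,\rho,\langle\cdot,\cdot\rangle,\circ)$ consists of a real vector bundle $E\to M$ over a smooth manifold, a nondegenerate symmetric fiberwise bilinear pairing $\langle\cdot,\cdot\rangle$ on $E$, a vector bundle map $\rho:E\to TM$ (the anchor), and an $\mathbb R$-bilinear operation $\circ$ on $\Gamma(E)$ (the Dorfman bracket) such that for all $f\in C^\infty(M)$, $x,y,z\in\Gamma(E)$: $x\circ(y\circ z)=(x\circ y)\circ z+y\circ(x\circ z)$; $\rho(x\circ y)=[\rho(x),\rho(y)]$; $x\circ(fy)=(\rho(x)f)y+f(x\circ y)$; $x\circ y+y\circ x=2D\langle x,y\rangle$; $(Df)\circ x=0$; $\rho(x)\langle y,z\rangle=\langle x\circ y,z\rangle+\langle y,x\circ z\rangle$. Here $D:C^\infty(M)\to\Gamma(E)$ is the $\mathbb R$-linear map defined by $\langle Df,x\rangle=\tfrac12\rho(x)f$. The Courant bracket is $[\![x,y]\!]=\tfrac12(x\circ y-y\circ x)$. For vector bundle endomorphisms $F,G$ of $E$ (over $\mathrm{id}_M$), the Nijenhuis concomitant is the tensor $N_{F,G}:E\otimes E\to E$ given by $N_{F,G}(X,Y)=FX\circ GY-F(X\circ GY)-G(FX\circ Y)+FG(X\circ Y)+GX\circ FY-G(X\circ FY)-F(GX\circ Y)+GF(X\circ Y)$. An almost hypercomplex structure on $E$ is a triple $(\mathbf I,\mathbf J,\mathbf K)$ of vector bundle endomorphisms of $E$ over $\mathrm{id}_M$, each orthogonal for $\langle\cdot,\cdot\rangle$, with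 $\mathbf I^2=\mathbf J^2=\mathbf K^2=\mathbf I\mathbf J\mathbf K=-1$. Given an almost hypercomplex structure, for $f\in C^\infty(M)$ and $X,Y\in\Gamma(E)$ set $\Delta_f(X,Y)=\langle X,Y\rangle Df+\langle\mathbf IX,Y\rangle\mathbf I Df+\langle\mathbf JX,Y\rangle\mathbf JDf+\langle\mathbf KX,Y\rangle\mathbf KDf$. A hypercomplex connection is an $\mathbb R$-bilinear map $\Gamma(E)\times\Gamma(E)\to\Gamma(E)$, $(X,Y)\mapsto\nabla_XY$, with $\nabla_{fX}Y=f\nabla_XY$ and $\nabla_X(fY)=(\rho(X)f)Y+f\nabla_XY-\Delta_f(X,Y)$. Its torsion is $T(X,Y)=\nabla_XY-\nabla_YX-[\![X,Y]\!]$. For an endomorphism $P$ of $E$, $(\nabla_XP)Y:=\nabla_X(PY)-P(\nabla_XY)$, and $\nabla P=0$ means this vanishes for all $X,Y$. *)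

theory Defs
  imports Main "HOL.Real_Vector_Spaces"
begin

text \<open>Algebraic model of a Courant algebroid.
  'f plays the role of the commutative real algebra C^\<infinity>(M) of smooth functions,
  'e the role of the C^\<infinity>(M)-module of sections Gamma(E), with module action smul.
  Vector fields are modelled as R-linear derivations of 'f (rho x is the vector field rho(x)).\<close>

definition is_module :: "('f::comm_ring_1 \<Rightarrow> 'e::ab_group_add \<Rightarrow> 'e) \<Rightarrow> bool" where
  "is_module smul \<longleftrightarrow>
     (\<forall>f x y. smul f (x + y) = smul f x + smul f y) \<and>
     (\<forall>f g x. smul (f + g) x = smul f x + smul g x) \<and>
     (\<forall>f g x. smul (f * g) x = smul f (smul g x)) \<and>
     (\<forall>x. smul 1 x = x)"

definition courant_algebroid ::
  "('f::{comm_ring_1,real_algebra_1} \<Rightarrow> 'e::ab_group_add \<Rightarrow> 'e) \<Rightarrow> ('e \<Rightarrow> 'f \<Rightarrow> 'f)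
   \<Rightarrow> ('e \<Rightarrow> 'e \<Rightarrow> 'f) \<Rightarrow> ('e \<Rightarrow> 'e \<Rightarrow> 'e) \<Rightarrow> ('f \<Rightarrow> 'e) \<Rightarrow> bool" where
  "courant_algebroid smul rho pair dorf D \<longleftrightarrow>
     is_module smul \<and>
     \<comment> \<open>pairing: symmetric, C-infinity-bilinear, nondegenerate\<close>
     (\<forall>x y. pair x y = pair y x) \<and>
     (\<forall>x y z. pair (x + y) z = pair x z + pair y z) \<and>
     (\<forall>f x y. pair (smul f x) y = f * pair x y) \<and>
     (\<forall>x. (\<forall>y. pair x y = 0) \<longrightarrow> x = 0) \<and>
     \<comment> \<open>anchor: bundle map into vector fields (R-linear derivations)\<close>
     (\<forall>x y f. rho (x + y) f = rho x f + rho y f) \<and>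
     (\<forall>g x f. rho (smul g x) f = g * rho x f) \<and>
     (\<forall>x f g. rho x (f + g) = rho x f + rho x g) \<and>
     (\<forall>x f g. rho x (f * g) = rho x f * g + f * rho x g) \<and>
     (\<forall>x c f. rho x (scaleR c f) = scaleR c (rho x f)) \<and>
     \<comment> \<open>Dorfman bracket is R-bilinear\<close>
     (\<forall>x y z. dorf (x + y) z = dorf x z + dorf y z) \<and>
     (\<forall>x y z. dorf x (y + z) = dorf x y + dorf x z) \<and>
     (\<forall>c x y. dorf (smul (of_real c) x) y = smul (of_real c) (dorf x y)) \<and>
     (\<forall>c x y. dorf x (smul (of_real c) y) = smul (of_real c) (dorf x y)) \<and>
     \<comment> \<open>D is defined by pair (D f) x = 1/2 rho(x) f\<close>
     (\<forall>f x. pair (D f) x = of_real (1/2) * rho x f) \<and>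
     \<comment> \<open>Courant algebroid axioms\<close>
     (\<forall>x y z. dorf x (dorf y z) = dorf (dorf x y) z + dorf y (dorf x z)) \<and>
     (\<forall>x y f. rho (dorf x y) f = rho x (rho y f) - rho y (rho x f)) \<and>
     (\<forall>x f y. dorf x (smul f y) = smul (rho x f) y + smul f (dorf x y)) \<and>
     (\<forall>x y. dorf x y + dorf y x = smul 2 (D (pair x y))) \<and>
     (\<forall>f x. dorf (D f) x = 0) \<and>
     (\<forall>x y z. rho x (pair y z) = pair (dorf x y) z + pair y (dorf x z))"

text \<open>Vector bundle endomorphism over the identity = C-infinity-linear map on sections.\<close>
definition bundle_endo :: "('f \<Rightarrow> 'e::ab_group_add \<Rightarrow> 'e) \<Rightarrow> ('e \<Rightarrow> 'e) \<Rightarrow> bool" where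
  "bundle_endo smul F \<longleftrightarrow> (\<forall>x y. F (x + y) = F x + F y) \<and> (\<forall>f x. F (smul f x) = smul f (F x))"

definition orthogonal_endo :: "('e \<Rightarrow> 'e \<Rightarrow> 'f) \<Rightarrow> ('e \<Rightarrow> 'e) \<Rightarrow> bool" where
  "orthogonal_endo pair F \<longleftrightarrow> (\<forall>x y. pair (F x) (F y) = pair x y)"

definition almost_hypercomplex ::
  "('f \<Rightarrow> 'e::ab_group_add \<Rightarrow> 'e) \<Rightarrow> ('e \<Rightarrow> 'e \<Rightarrow> 'f) \<Rightarrow> ('e \<Rightarrow> 'e) \<Rightarrow> ('e \<Rightarrow> 'e) \<Rightarrow> ('e \<Rightarrow> 'e) \<Rightarrow> bool" where
  "almost_hypercomplex smul pair I J K \<longleftrightarrow>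
     bundle_endo smul I \<and> bundle_endo smul J \<and> bundle_endo smul K \<and>
     orthogonal_endo pair I \<and> orthogonal_endo pair J \<and> orthogonal_endo pair K \<and>
     (\<forall>x. I (I x) = - x) \<and> (\<forall>x. J (J x) = - x) \<and> (\<forall>x. K (K x) = - x) \<and>
     (\<forall>x. I (J (K x)) = - x)"

definition nijenhuis_conc :: "('e \<Rightarrow> 'e \<Rightarrow> 'e::ab_group_add) \<Rightarrow> ('e \<Rightarrow> 'e) \<Rightarrow> ('e \<Rightarrow> 'e) \<Rightarrow> 'e \<Rightarrow> 'e \<Rightarrow> 'e" where
  "nijenhuis_conc dorf F G X Y =
     dorf (F X) (G Y) - F (dorf X (G Y)) - G (dorf (F X) Y) + F (G (dorf X Y))
   + dorf (G X) (F Y) - G (dorf X (F Y)) - F (dorf (G X) Y) + G (F (dorf X Y))"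

definition courant_bracket :: "('f::real_algebra_1 \<Rightarrow> 'e::ab_group_add \<Rightarrow> 'e) \<Rightarrow> ('e \<Rightarrow> 'e \<Rightarrow> 'e) \<Rightarrow> 'e \<Rightarrow> 'e \<Rightarrow> 'e" where
  "courant_bracket smul dorf x y = smul (of_real (1/2)) (dorf x y - dorf y x)"

definition Delta ::
  "('f \<Rightarrow> 'e::ab_group_add \<Rightarrow> 'e) \<Rightarrow> ('e \<Rightarrow> 'e \<Rightarrow> 'f) \<Rightarrow> ('f \<Rightarrow> 'e) \<Rightarrow> ('e \<Rightarrow> 'e) \<Rightarrow> ('e \<Rightarrow> 'e) \<Rightarrow> ('e \<Rightarrow> 'e)
   \<Rightarrow> 'f \<Rightarrow> 'e \<Rightarrow> 'e \<Rightarrow> 'e" where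
  "Delta smul pair D I J K f X Y =
     smul (pair X Y) (D f) + smul (pair (I X) Y) (I (D f))
   + smul (pair (J X) Y) (J (D f)) + smul (pair (K X) Y) (K (D f))"

definition hypercomplex_connection ::
  "('f::{comm_ring_1,real_algebra_1} \<Rightarrow> 'e::ab_group_add \<Rightarrow> 'e) \<Rightarrow> ('e \<Rightarrow> 'f \<Rightarrow> 'f) \<Rightarrow> ('e \<Rightarrow> 'e \<Rightarrow> 'f)
   \<Rightarrow> ('f \<Rightarrow> 'e) \<Rightarrow> ('e \<Rightarrow> 'e) \<Rightarrow> ('e \<Rightarrow> 'e) \<Rightarrow> ('e \<Rightarrow> 'e) \<Rightarrow> ('e \<Rightarrow> 'e \<Rightarrow> 'e) \<Rightarrow> bool" where
  "hypercomplex_connection smul rho pair D I J K nabla \<longleftrightarrow>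
     \<comment> \<open>R-bilinear\<close>
     (\<forall>X X' Y. nabla (X + X') Y = nabla X Y + nabla X' Y) \<and>
     (\<forall>X Y Y'. nabla X (Y + Y') = nabla X Y + nabla X Y') \<and>
     (\<forall>c X Y. nabla (smul (of_real c) X) Y = smul (of_real c) (nabla X Y)) \<and>
     (\<forall>c X Y. nabla X (smul (of_real c) Y) = smul (of_real c) (nabla X Y)) \<and>
     \<comment> \<open>C-infinity-linear in X, modified Leibniz rule in Y\<close>
     (\<forall>f X Y. nabla (smul f X) Y = smul f (nabla X Y)) \<and>
     (\<forall>f X Y. nabla X (smul f Y) = smul (rho X f) Y + smul f (nabla X Y) - Delta smul pair D I J K f X Y)"

definition torsion :: "('f::real_algebra_1 \<Rightarrow> 'e::ab_group_add \<Rightarrow> 'e) \<Rightarrow> ('e \<Rightarrow> 'e \<Rightarrow> 'e) \<Rightarrow> ('e \<Rightarrow> 'e \<Rightarrow> 'e) \<Rightarrow> 'e \<Rightarrow> 'e \<Rightarrow> 'e" where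
  "torsion smul dorf nabla X Y = nabla X Y - nabla Y X - courant_bracket smul dorf X Y"

text \<open>(nabla_X P) Y = nabla_X (P Y) - P (nabla_X Y); "nabla P = 0" means this vanishes identically.\<close>
definition parallel :: "('e \<Rightarrow> 'e \<Rightarrow> 'e::ab_group_add) \<Rightarrow> ('e \<Rightarrow> 'e) \<Rightarrow> bool" where
  "parallel nabla P \<longleftrightarrow> (\<forall>X Y. nabla X (P Y) - P (nabla X Y) = 0)"

text \<open>The connection of the theorem with an explicit formula: nabla_X Y = -1/2 C(BY o AX - B(Y o AX) - A(BY o X) + BA(Y o X)).
  For (A,B,C) = (I,J,K), (J,K,I), (K,I,J) this gives nabla, nabla', nabla''.\<close>
definition formula_connection ::
  "('f::real_algebra_1 \<Rightarrow> 'e::ab_group_add \<Rightarrow> 'e) \<Rightarrow> ('e \<Rightarrow> 'e \<Rightarrow> 'e) \<Rightarrow> ('e \<Rightarrow> 'e) \<Rightarrow> ('e \<Rightarrow> 'e) \<Rightarrow> ('e \<Rightarrow> 'e)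
   \<Rightarrow> 'e \<Rightarrow> 'e \<Rightarrow> 'e" where
  "formula_connection smul dorf A B C X Y =
     smul (of_real (-1/2))
       (C (dorf (B Y) (A X) - B (dorf Y (A X)) - A (dorf (B Y) X) + B (A (dorf Y X))))"

end

theory Submission
  imports Defs
begin

locale HCA =
  fixes smul :: "'f::{comm_ring_1,real_algebra_1} \<Rightarrow> 'e::ab_group_add \<Rightarrow> 'e"
    and rho :: "'e \<Rightarrow> 'f \<Rightarrow> 'f"
    and pair :: "'e \<Rightarrow> 'e \<Rightarrow> 'f"
    and dorf :: "'e \<Rightarrow> 'e \<Rightarrow> 'e"
    and D :: "'f \<Rightarrow> 'e"
    and I J K :: "'e \<Rightarrow> 'e"
  assumes CA: "courant_algebroid smul rho pair dorf D"
    and HC: "almost_hypercomplex smul pair I J K"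
begin

lemmas CAx0 = CA[unfolded courant_algebroid_def]

lemma mod: "is_module smul" using CAx0 by (rule conjunct1)
lemma smul_addr[simp]: "smul f (x + y) = smul f x + smul f y" using mod unfolding is_module_def by blast
lemma smul_addl: "smul (f + g) x = smul f x + smul g x" using mod unfolding is_module_def by blast
lemma smul_mult: "smul (f * g) x = smul f (smul g x)" using mod unfolding is_module_def by blast
lemma smul_one[simp]: "smul 1 x = x" using mod unfolding is_module_def by blast
lemma smul_zeror[simp]: "smul f 0 = 0"
  using smul_addr[of f 0 0] by simp
lemma smul_zerol[simp]: "smul 0 x = 0"
  using smul_addl[of 0 0 x] by simp
lemma smul_negr[simp]: "smul f (- x) = - smul f x"
  using smul_addr[of f x "-x"] by (simp add: add.commute eq_neg_iff_add_eq_0)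
lemma smul_negl[simp]: "smul (- f) x = - smul f x"
  using smul_addl[of f "-f" x] by (simp add: add.commute eq_neg_iff_add_eq_0)
lemma smul_diffr[simp]: "smul f (x - y) = smul f x - smul f y"
  by (simp only: diff_conv_add_uminus smul_addr smul_negr)
lemma smul_two[simp]: "smul 2 x = x + x"
  using smul_addl[of 1 1 x] by (simp only: one_add_one smul_one)
lemma smul_half_two: "smul (of_real (1/2)) (x + x) = x"
proof -
  have "smul (of_real (1/2)) (x + x) = smul (of_real (1/2)) (smul 2 x)" by simp
  also have "\<dots> = smul (of_real (1/2) * 2) x" by (simp only: smul_mult)
  also have "of_real (1/2) * (2::'f) = 1"
  proof -
    have "of_real (1/2) * (2::'f) = of_real (1/2 * 2)" by (simp only: of_real_mult of_real_numeral)
    then show ?thesis by simp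
  qed
  finally show ?thesis by simp
qed
lemma smul_mhalf_two: "smul (of_real (-1/2)) (x + x) = - x"
proof -
  have h: "of_real (-1/2) = - (of_real (1/2) :: 'f)" by simp
  have "smul (of_real (-1/2)) (x + x) = - smul (of_real (1/2)) (x + x)" by (simp only: h smul_negl)
  then show ?thesis by (simp only: smul_half_two)
qed


lemma pair_sym: "pair x y = pair y x" using CAx0[THEN conjunct2, THEN conjunct1] by blast
lemma pair_addl[simp]: "pair (x + y) z = pair x z + pair y z" using CAx0[THEN conjunct2, THEN conjunct2, THEN conjunct1] by blast
lemma pair_addr[simp]: "pair z (x + y) = pair z x + pair z y" using pair_addl[of x y z] pair_sym by metis
lemma pair_smull[simp]: "pair (smul f x) y = f * pair x y" using CAx0[THEN conjunct2, THEN conjunct2, THEN conjunct2, THEN conjunct1] by blast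
lemma pair_smulr[simp]: "pair y (smul f x) = f * pair y x" using pair_smull[of f x y] pair_sym by metis
lemma pair_nondeg: "(\<And>y. pair x y = 0) \<Longrightarrow> x = 0" using CAx0[THEN conjunct2, THEN conjunct2, THEN conjunct2, THEN conjunct2, THEN conjunct1] by blast
lemma pair_zerol[simp]: "pair 0 y = 0" using pair_addl[of 0 0 y] by simp
lemma pair_zeror[simp]: "pair y 0 = 0" using pair_addr[of y 0 0] by simp
lemma pair_negl[simp]: "pair (- x) y = - pair x y" using pair_addl[of x "-x" y] by (simp add: add.commute eq_neg_iff_add_eq_0)
lemma pair_negr[simp]: "pair y (- x) = - pair y x" using pair_addr[of y x "-x"] by (simp add: add.commute eq_neg_iff_add_eq_0)
lemma pair_diffl[simp]: "pair (x - z) y = pair x y - pair z y" by (simp only: diff_conv_add_uminus pair_addl pair_negl)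
lemma pair_diffr[simp]: "pair y (x - z) = pair y x - pair y z" by (simp only: diff_conv_add_uminus pair_addr pair_negr)
lemma rho_addl: "rho (x + y) f = rho x f + rho y f" using CAx0[THEN conjunct2, THEN conjunct2, THEN conjunct2, THEN conjunct2, THEN conjunct2, THEN conjunct1] by blast
lemma rho_smul: "rho (smul g x) f = g * rho x f" using CAx0[THEN conjunct2, THEN conjunct2, THEN conjunct2, THEN conjunct2, THEN conjunct2, THEN conjunct2, THEN conjunct1] by blast
lemma rho_addr: "rho x (f + g) = rho x f + rho x g" using CAx0[THEN conjunct2, THEN conjunct2, THEN conjunct2, THEN conjunct2, THEN conjunct2, THEN conjunct2, THEN conjunct2, THEN conjunct1] by blast
lemma rho_mult: "rho x (f * g) = rho x f * g + f * rho x g" using CAx0[THEN conjunct2, THEN conjunct2, THEN conjunct2, THEN conjunct2, THEN conjunct2, THEN conjunct2, THEN conjunct2, THEN conjunct2, THEN conjunct1] by blast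
lemma rho_scaleR: "rho x (scaleR c f) = scaleR c (rho x f)" using CAx0[THEN conjunct2, THEN conjunct2, THEN conjunct2, THEN conjunct2, THEN conjunct2, THEN conjunct2, THEN conjunct2, THEN conjunct2, THEN conjunct2, THEN conjunct1] by blast
lemma dorf_addl[simp]: "dorf (x + y) z = dorf x z + dorf y z" using CAx0[THEN conjunct2, THEN conjunct2, THEN conjunct2, THEN conjunct2, THEN conjunct2, THEN conjunct2, THEN conjunct2, THEN conjunct2, THEN conjunct2, THEN conjunct2, THEN conjunct1] by blast
lemma dorf_addr[simp]: "dorf x (y + z) = dorf x y + dorf x z" using CAx0[THEN conjunct2, THEN conjunct2, THEN conjunct2, THEN conjunct2, THEN conjunct2, THEN conjunct2, THEN conjunct2, THEN conjunct2, THEN conjunct2, THEN conjunct2, THEN conjunct2, THEN conjunct1] by blast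
lemma pairD: "pair (D f) x = of_real (1/2) * rho x f" using CAx0[THEN conjunct2, THEN conjunct2, THEN conjunct2, THEN conjunct2, THEN conjunct2, THEN conjunct2, THEN conjunct2, THEN conjunct2, THEN conjunct2, THEN conjunct2, THEN conjunct2, THEN conjunct2, THEN conjunct2, THEN conjunct2, THEN conjunct1] by blast
lemma dorf_smulr: "dorf x (smul f y) = smul (rho x f) y + smul f (dorf x y)" using CAx0[THEN conjunct2, THEN conjunct2, THEN conjunct2, THEN conjunct2, THEN conjunct2, THEN conjunct2, THEN conjunct2, THEN conjunct2, THEN conjunct2, THEN conjunct2, THEN conjunct2, THEN conjunct2, THEN conjunct2, THEN conjunct2, THEN conjunct2, THEN conjunct2, THEN conjunct2, THEN conjunct1] by blast
lemma dorf_sym: "dorf x y + dorf y x = smul 2 (D (pair x y))" using CAx0[THEN conjunct2, THEN conjunct2, THEN conjunct2, THEN conjunct2, THEN conjunct2, THEN conjunct2, THEN conjunct2, THEN conjunct2, THEN conjunct2, THEN conjunct2, THEN conjunct2, THEN conjunct2, THEN conjunct2, THEN conjunct2, THEN conjunct2, THEN conjunct2, THEN conjunct2, THEN conjunct2, THEN conjunct1] by blast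
lemma dorf_zerol[simp]: "dorf 0 y = 0" using dorf_addl[of 0 0 y] by simp
lemma dorf_zeror[simp]: "dorf y 0 = 0" using dorf_addr[of y 0 0] by simp
lemma dorf_negl[simp]: "dorf (- x) y = - dorf x y" using dorf_addl[of x "-x" y] by (simp add: add.commute eq_neg_iff_add_eq_0)
lemma dorf_negr[simp]: "dorf y (- x) = - dorf y x" using dorf_addr[of y x "-x"] by (simp add: add.commute eq_neg_iff_add_eq_0)
lemma dorf_diffl[simp]: "dorf (x - z) y = dorf x y - dorf z y" by (simp only: diff_conv_add_uminus dorf_addl dorf_negl)
lemma dorf_diffr[simp]: "dorf y (x - z) = dorf y x - dorf y z" by (simp only: diff_conv_add_uminus dorf_addr dorf_negr)

lemma rho_zero: "rho x 0 = 0" using rho_addr[of x 0 0] by simp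
lemma rho_neg: "rho x (- f) = - rho x f" using rho_addr[of x f "-f"] rho_zero by (simp add: add.commute eq_neg_iff_add_eq_0)

lemma D_add[simp]: "D (f + g) = D f + D g"
proof -
  have "pair (D (f + g) - (D f + D g)) y = 0" for y
    by (simp add: pairD rho_addr algebra_simps)
  then show ?thesis using pair_nondeg by fastforce
qed
lemma D_zero[simp]: "D 0 = 0" using D_add[of 0 0] by simp
lemma D_neg[simp]: "D (- f) = - D f" using D_add[of f "-f"] by (simp add: add.commute eq_neg_iff_add_eq_0)
lemma D_diff[simp]: "D (f - g) = D f - D g" by (simp only: diff_conv_add_uminus D_add D_neg)
lemma D_mult: "D (f * g) = smul f (D g) + smul g (D f)"
proof -
  have "pair (D (f * g) - (smul f (D g) + smul g (D f))) y = 0" for y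
    by (simp add: pairD rho_mult algebra_simps)
  then show ?thesis using pair_nondeg by fastforce
qed

lemma dorf_smull: "dorf (smul f x) y = smul f (dorf x y) - smul (rho y f) x + smul 2 (smul (pair x y) (D f))"
proof -
  have "dorf (smul f x) y = smul 2 (D (pair (smul f x) y)) - dorf y (smul f x)"
    using dorf_sym[of "smul f x" y] by (simp add: algebra_simps del: smul_two)
  also have "\<dots> = smul 2 (smul f (D (pair x y)) + smul (pair x y) (D f)) - smul (rho y f) x - smul f (dorf y x)"
    by (simp add: D_mult dorf_smulr del: smul_two)
  also have "dorf y x = smul 2 (D (pair x y)) - dorf x y"
    using dorf_sym[of x y] by (simp add: algebra_simps pair_sym del: smul_two)
  finally show ?thesis by (simp add: algebra_simps)
qed

lemmas HCx = HC[unfolded almost_hypercomplex_def]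

lemma I_add[simp]: "I (x + y) = I x + I y" using HCx[THEN conjunct1] unfolding bundle_endo_def by blast
lemma J_add[simp]: "J (x + y) = J x + J y" using HCx[THEN conjunct2, THEN conjunct1] unfolding bundle_endo_def by blast
lemma K_add[simp]: "K (x + y) = K x + K y" using HCx[THEN conjunct2, THEN conjunct2, THEN conjunct1] unfolding bundle_endo_def by blast
lemma I_smul[simp]: "I (smul f x) = smul f (I x)" using HCx[THEN conjunct1] unfolding bundle_endo_def by blast
lemma J_smul[simp]: "J (smul f x) = smul f (J x)" using HCx[THEN conjunct2, THEN conjunct1] unfolding bundle_endo_def by blast
lemma K_smul[simp]: "K (smul f x) = smul f (K x)" using HCx[THEN conjunct2, THEN conjunct2, THEN conjunct1] unfolding bundle_endo_def by blast
lemma I_zero[simp]: "I 0 = 0" using I_add[of 0 0] by simp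
lemma J_zero[simp]: "J 0 = 0" using J_add[of 0 0] by simp
lemma K_zero[simp]: "K 0 = 0" using K_add[of 0 0] by simp
lemma I_neg[simp]: "I (- x) = - I x" using I_add[of x "-x"] by (simp add: add.commute eq_neg_iff_add_eq_0)
lemma J_neg[simp]: "J (- x) = - J x" using J_add[of x "-x"] by (simp add: add.commute eq_neg_iff_add_eq_0)
lemma K_neg[simp]: "K (- x) = - K x" using K_add[of x "-x"] by (simp add: add.commute eq_neg_iff_add_eq_0)
lemma I_diff[simp]: "I (x - y) = I x - I y" by (simp only: diff_conv_add_uminus I_add I_neg)
lemma J_diff[simp]: "J (x - y) = J x - J y" by (simp only: diff_conv_add_uminus J_add J_neg)
lemma K_diff[simp]: "K (x - y) = K x - K y" by (simp only: diff_conv_add_uminus K_add K_neg)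
lemma II[simp]: "I (I x) = - x" using HCx[THEN conjunct2, THEN conjunct2, THEN conjunct2, THEN conjunct2, THEN conjunct2, THEN conjunct2, THEN conjunct1] by blast
lemma JJ[simp]: "J (J x) = - x" using HCx[THEN conjunct2, THEN conjunct2, THEN conjunct2, THEN conjunct2, THEN conjunct2, THEN conjunct2, THEN conjunct2, THEN conjunct1] by blast
lemma KK[simp]: "K (K x) = - x" using HCx[THEN conjunct2, THEN conjunct2, THEN conjunct2, THEN conjunct2, THEN conjunct2, THEN conjunct2, THEN conjunct2, THEN conjunct2, THEN conjunct1] by blast
lemma IJK: "I (J (K x)) = - x" using HCx[THEN conjunct2, THEN conjunct2, THEN conjunct2, THEN conjunct2, THEN conjunct2, THEN conjunct2, THEN conjunct2, THEN conjunct2, THEN conjunct2] by blast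
lemma IJ[simp]: "I (J x) = K x"
proof -
  have "I (J (K (K x))) = - K x" by (rule IJK)
  then show ?thesis by simp
qed
lemma IK[simp]: "I (K x) = - J x"
proof -
  have "I (K x) = I (I (J x))" by (simp only: IJ)
  then show ?thesis by (simp only: II)
qed
lemma KJ[simp]: "K (J x) = - I x"
proof -
  have "I (J (J x)) = K (J x)" by (rule IJ)
  then show ?thesis by simp
qed
lemma JI[simp]: "J (I x) = - K x"
proof -
  have a: "I (J (I (J y))) = - y" for y
  proof -
    have "K (K y) = - y" by (rule KK)
    then show ?thesis by (simp only: IJ)
  qed
  have "I (J (I (J (J x)))) = - J x" by (rule a)
  then have "- I (J (I x)) = - J x" by (simp only: JJ I_neg J_neg)
  then have b: "I (J (I x)) = J x" by (simp only: neg_equal_iff_equal)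
  have "I (I (J (I x))) = I (J x)" by (simp only: b)
  then have "- J (I x) = I (J x)" by (simp only: II)
  then have "- J (I x) = K x" by (simp only: IJ)
  then show ?thesis by (metis minus_minus)
qed
lemma JK[simp]: "J (K x) = I x"
proof -
  have "J (K x) = J (I (J x))" by (simp only: IJ)
  then show ?thesis by (simp only: JI KJ minus_minus)
qed
lemma KI[simp]: "K (I x) = J x"
proof -
  have "K (I x) = I (J (I x))" by (simp only: IJ)
  then show ?thesis by (simp only: JI IK I_neg minus_minus)
qed

lemma orth_I: "pair (I x) (I y) = pair x y" using HCx[THEN conjunct2, THEN conjunct2, THEN conjunct2, THEN conjunct1] unfolding orthogonal_endo_def by blast
lemma orth_J: "pair (J x) (J y) = pair x y" using HCx[THEN conjunct2, THEN conjunct2, THEN conjunct2, THEN conjunct2, THEN conjunct1] unfolding orthogonal_endo_def by blast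
lemma orth_K: "pair (K x) (K y) = pair x y" using HCx[THEN conjunct2, THEN conjunct2, THEN conjunct2, THEN conjunct2, THEN conjunct2, THEN conjunct1] unfolding orthogonal_endo_def by blast
lemma pair_Il[simp]: "pair (I x) y = - pair x (I y)"
  using orth_I[of "I x" y] by simp
lemma pair_Jl[simp]: "pair (J x) y = - pair x (J y)"
  using orth_J[of "J x" y] by simp
lemma pair_Kl[simp]: "pair (K x) y = - pair x (K y)"
  using orth_K[of "K x" y] by simp

end

context HCA begin

definition tau where "tau X Y = I (D (pair X (I Y))) + J (D (pair X (J Y))) + K (D (pair X (K Y)))"

lemma smul_comm: "smul f (smul g x) = smul g (smul f x)"
  by (metis smul_mult mult.commute)

lemma good_decomp:
  assumes hc: "hypercomplex_connection smul rho pair D I J K nabla"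
    and tor: "\<And>X Y. torsion smul dorf nabla X Y = tau X Y"
  shows "dorf X Y = nabla X Y - nabla Y X + D (pair X Y) - tau X Y"
proof -
  have s: "dorf Y X = D (pair X Y) + D (pair X Y) - dorf X Y"
    using dorf_sym[of X Y] by (simp add: algebra_simps)
  have "dorf X Y - dorf Y X = (dorf X Y - D (pair X Y)) + (dorf X Y - D (pair X Y))"
    by (simp add: s algebra_simps)
  then have "courant_bracket smul dorf X Y = dorf X Y - D (pair X Y)"
    unfolding courant_bracket_def by (simp only: smul_half_two)
  then show ?thesis using tor[of X Y] unfolding torsion_def by (simp add: algebra_simps)
qed

lemma good_facts:
  assumes hc: "hypercomplex_connection smul rho pair D I J K nabla"
  shows "nabla (a + b) c = nabla a c + nabla b c" "nabla c (a + b) = nabla c a + nabla c b"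
   "nabla (- a) c = - nabla a c" "nabla c (- a) = - nabla c a"
proof -
  have 1: "nabla (a + b) c = nabla a c + nabla b c" for a b c
    using hc unfolding hypercomplex_connection_def by blast
  have 2: "nabla c (a + b) = nabla c a + nabla c b" for a b c
    using hc unfolding hypercomplex_connection_def by blast
  show "nabla (a + b) c = nabla a c + nabla b c" "nabla c (a + b) = nabla c a + nabla c b"
    by (rule 1, rule 2)
  have z1: "nabla 0 c = 0" for c using 1[of 0 0 c] by simp
  have z2: "nabla c 0 = 0" for c using 2[of c 0 0] by simp
  show "nabla (- a) c = - nabla a c" using 1[of a "-a" c] z1
    by (simp add: add.commute eq_neg_iff_add_eq_0)
  show "nabla c (- a) = - nabla c a" using 2[of c a "-a"] z2
    by (simp add: add.commute eq_neg_iff_add_eq_0)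
qed

lemma par_rule: "parallel nabla P \<Longrightarrow> nabla X (P Y) = P (nabla X Y)"
  unfolding parallel_def by (metis eq_iff_diff_eq_0)

lemma good_results:
  assumes hc: "hypercomplex_connection smul rho pair D I J K nabla"
    and tor: "\<And>X Y. torsion smul dorf nabla X Y = tau X Y"
    and pI: "parallel nabla I" and pJ: "parallel nabla J" and pK: "parallel nabla K"
  shows "nijenhuis_conc dorf I J X Y = 0"
    "formula_connection smul dorf I J K X Y = nabla X Y"
    "formula_connection smul dorf J K I X Y = nabla X Y"
    "formula_connection smul dorf K I J X Y = nabla X Y"
proof -
  note dec = good_decomp[OF hc tor]
  note gf = good_facts[OF hc]
  note pr = par_rule[OF pI] par_rule[OF pJ] par_rule[OF pK]
  have fl: "pair Y X = pair X Y" "pair Y (I X) = - pair X (I Y)" "pair Y (J X) = - pair X (J Y)"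
     "pair Y (K X) = - pair X (K Y)"
    by (simp_all add: pair_sym[of Y])
  show "nijenhuis_conc dorf I J X Y = 0"
    unfolding nijenhuis_conc_def dec tau_def by (simp add: gf pr fl algebra_simps)
  have "K (dorf (J Y) (I X) - J (dorf Y (I X)) - I (dorf (J Y) X) + J (I (dorf Y X)))
      = - (nabla X Y + nabla X Y)"
    unfolding dec tau_def by (simp add: gf pr fl algebra_simps)
  then show "formula_connection smul dorf I J K X Y = nabla X Y"
    unfolding formula_connection_def by (simp only: smul_negr smul_mhalf_two minus_minus)
  have "I (dorf (K Y) (J X) - K (dorf Y (J X)) - J (dorf (K Y) X) + K (J (dorf Y X)))
      = - (nabla X Y + nabla X Y)"
    unfolding dec tau_def by (simp add: gf pr fl algebra_simps)
  then show "formula_connection smul dorf J K I X Y = nabla X Y"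
    unfolding formula_connection_def by (simp only: smul_negr smul_mhalf_two minus_minus)
  have "J (dorf (I Y) (K X) - I (dorf Y (K X)) - K (dorf (I Y) X) + I (K (dorf Y X)))
      = - (nabla X Y + nabla X Y)"
    unfolding dec tau_def by (simp add: gf pr fl algebra_simps)
  then show "formula_connection smul dorf K I J X Y = nabla X Y"
    unfolding formula_connection_def by (simp only: smul_negr smul_mhalf_two minus_minus)
qed

end

context HCA begin

definition Qi where "Qi X Y = K (dorf (J Y) (I X) - J (dorf Y (I X)) - I (dorf (J Y) X) + J (I (dorf Y X)))"

lemma F_eq: "formula_connection smul dorf I J K X Y = smul (of_real (-1/2)) (Qi X Y)"
  unfolding formula_connection_def Qi_def ..

lemma Qi_addl: "Qi (X + X') Y = Qi X Y + Qi X' Y" unfolding Qi_def by (simp add: algebra_simps)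
lemma Qi_addr: "Qi X (Y + Y') = Qi X Y + Qi X Y'" unfolding Qi_def by (simp add: algebra_simps)
lemma Qi_smull: "Qi (smul f X) Y = smul f (Qi X Y)"
  unfolding Qi_def by (simp add: dorf_smulr algebra_simps)
lemma Qi_smulr: "Qi X (smul f Y) = smul f (Qi X Y) + (Delta smul pair D I J K f X Y - smul (rho X f) Y)
   + (Delta smul pair D I J K f X Y - smul (rho X f) Y)"
proof -
  have fl: "pair Y X = pair X Y" "pair Y (I X) = - pair X (I Y)" "pair Y (J X) = - pair X (J Y)"
     "pair Y (K X) = - pair X (K Y)"
    by (simp_all add: pair_sym[of Y])
  show ?thesis unfolding Qi_def Delta_def by (simp add: dorf_smulr dorf_smull fl algebra_simps)
qed

end

context HCA begin

abbreviation "F \<equiv> formula_connection smul dorf I J K"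

lemma F_hc: "hypercomplex_connection smul rho pair D I J K F"
proof -
  have l: "F (smul f X) Y = smul f (F X Y)" for f X Y
    unfolding F_eq Qi_smull by (rule smul_comm)
  have r: "F X (smul f Y) = smul (rho X f) Y + smul f (F X Y) - Delta smul pair D I J K f X Y" for f X Y
  proof -
    define w where "w = Delta smul pair D I J K f X Y - smul (rho X f) Y"
    have "F X (smul f Y) = smul (of_real (-1/2)) (smul f (Qi X Y) + (w + w))"
      unfolding F_eq Qi_smulr w_def by (simp only: add.assoc)
    also have "\<dots> = smul f (F X Y) + smul (of_real (-1/2)) (w + w)"
      unfolding F_eq by (simp only: smul_addr smul_comm[of "of_real (-1/2)" f])
    finally have "F X (smul f Y) = smul f (F X Y) + smul (of_real (-1/2)) (w + w)" .
    then show ?thesis unfolding w_def by (simp only: smul_mhalf_two) (simp add: algebra_simps)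
  qed
  have rr: "F X (smul (of_real c) Y) = smul (of_real c) (F X Y)" for c X Y
  proof -
    have r0: "rho x 1 = 0" for x using rho_mult[of x 1 1] by simp
    have rc: "rho X (of_real c) = 0"
      using rho_scaleR[of X c 1] r0 by (simp add: of_real_def)
    have Dc: "D (of_real c) = 0"
    proof -
      have "pair (D (of_real c)) y = 0" for y
        using rho_scaleR[of y c 1] r0 by (simp add: pairD of_real_def)
      then show ?thesis using pair_nondeg by blast
    qed
    show ?thesis using r[of X "of_real c" Y] by (simp add: rc Dc Delta_def)
  qed
  show ?thesis unfolding hypercomplex_connection_def
    using l r rr by (simp add: F_eq Qi_addl Qi_addr)
qed

lemma F_par:
  assumes N: "\<And>X Y. nijenhuis_conc dorf I J X Y = 0"
  shows "parallel F I" "parallel F J" "parallel F K"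
proof -
  have "Qi X (I Y) - I (Qi X Y) = J (nijenhuis_conc dorf I J Y X) + K (nijenhuis_conc dorf I J (I Y) X)" for X Y
    unfolding Qi_def nijenhuis_conc_def by (simp add: algebra_simps)
  then show "parallel F I" unfolding parallel_def F_eq by (simp add: N flip: smul_diffr)
  have "Qi X (J Y) - J (Qi X Y) = 0" for X Y
    unfolding Qi_def by (simp add: algebra_simps)
  then show "parallel F J" unfolding parallel_def F_eq by (simp flip: smul_diffr)
  have "Qi X (K Y) - K (Qi X Y) = nijenhuis_conc dorf I J Y X - I (nijenhuis_conc dorf I J (I Y) X)" for X Y
    unfolding Qi_def nijenhuis_conc_def by (simp add: algebra_simps)
  then show "parallel F K" unfolding parallel_def F_eq by (simp add: N flip: smul_diffr)
qed

lemma F_tor: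
  assumes N: "\<And>X Y. nijenhuis_conc dorf I J X Y = 0"
  shows "torsion smul dorf F X Y = tau X Y"
proof -
  define fl where "fl P Q = dorf P Q + dorf Q P - (D (pair P Q) + D (pair P Q))" for P Q
  have fl0: "fl P Q = 0" for P Q unfolding fl_def using dorf_sym[of P Q] by simp
  have "Qi X Y - Qi Y X + (dorf X Y - dorf Y X) + (tau X Y + tau X Y)
     = - K (nijenhuis_conc dorf I J X Y) - J (fl X (J Y)) + I (fl (I X) Y) + K (fl (I X) (J Y))"
    unfolding Qi_def nijenhuis_conc_def fl_def tau_def by (simp add: algebra_simps)
  then have e: "Qi X Y - Qi Y X = - (dorf X Y - dorf Y X) - (tau X Y + tau X Y)"
    by (simp add: N fl0 algebra_simps)
  have h: "of_real (-1/2) = - (of_real (1/2) :: 'f)" by simp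
  have "F X Y - F Y X = smul (of_real (-1/2)) (Qi X Y - Qi Y X)"
    unfolding F_eq by simp
  also have "\<dots> = smul (of_real (1/2)) (dorf X Y - dorf Y X) + tau X Y"
    unfolding e by (simp only: smul_diffr smul_negr smul_mhalf_two) (simp add: h)
  finally show ?thesis unfolding torsion_def courant_bracket_def by simp
qed

end

theorem mainTheorem8:
  fixes smul :: "'f::{comm_ring_1,real_algebra_1} \<Rightarrow> 'e::ab_group_add \<Rightarrow> 'e"
    and rho :: "'e \<Rightarrow> 'f \<Rightarrow> 'f"
    and pair :: "'e \<Rightarrow> 'e \<Rightarrow> 'f"
    and dorf :: "'e \<Rightarrow> 'e \<Rightarrow> 'e"
    and D :: "'f \<Rightarrow> 'e"
    and I J K :: "'e \<Rightarrow> 'e"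
  assumes CA: "courant_algebroid smul rho pair dorf D"
    and HC: "almost_hypercomplex smul pair I J K"
  defines "good \<equiv> \<lambda>nabla.
      hypercomplex_connection smul rho pair D I J K nabla \<and>
      parallel nabla I \<and> parallel nabla J \<and> parallel nabla K \<and>
      (\<forall>X Y. torsion smul dorf nabla X Y =
               I (D (pair X (I Y))) + J (D (pair X (J Y))) + K (D (pair X (K Y))))"
  shows "((\<exists>nabla. good nabla) \<longleftrightarrow> (\<forall>X Y. nijenhuis_conc dorf I J X Y = 0)) \<and>
         ((\<forall>X Y. nijenhuis_conc dorf I J X Y = 0) \<longrightarrow>
            (\<forall>nabla. good nabla \<longrightarrow>
               (\<forall>X Y. nabla X Y = formula_connection smul dorf I J K X Y \<and>
                      nabla X Y = formula_connection smul dorf J K I X Y \<and>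
                      nabla X Y = formula_connection smul dorf K I J X Y)))"
proof -
  interpret HCA smul rho pair dorf D I J K using CA HC by unfold_locales
  have gd: "good nabla \<longleftrightarrow> hypercomplex_connection smul rho pair D I J K nabla \<and>
      parallel nabla I \<and> parallel nabla J \<and> parallel nabla K \<and>
      (\<forall>X Y. torsion smul dorf nabla X Y = tau X Y)" for nabla
    unfolding good_def tau_def ..
  have A: "(\<exists>nabla. good nabla) \<longleftrightarrow> (\<forall>X Y. nijenhuis_conc dorf I J X Y = 0)"
  proof
    assume "\<exists>nabla. good nabla"
    then obtain nabla where "good nabla" by blast
    then show "\<forall>X Y. nijenhuis_conc dorf I J X Y = 0"
      unfolding gd using good_results(1) by blast
  next
    assume N: "\<forall>X Y. nijenhuis_conc dorf I J X Y = 0"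
    have "good F" unfolding gd using F_hc F_par[OF N[rule_format]] F_tor[OF N[rule_format]] by blast
    then show "\<exists>nabla. good nabla" by blast
  qed
  have B: "\<forall>nabla. good nabla \<longrightarrow>
               (\<forall>X Y. nabla X Y = formula_connection smul dorf I J K X Y \<and>
                      nabla X Y = formula_connection smul dorf J K I X Y \<and>
                      nabla X Y = formula_connection smul dorf K I J X Y)"
  proof (intro allI impI)
    fix nabla X Y assume "good nabla"
    then have g: "hypercomplex_connection smul rho pair D I J K nabla"
      "\<And>X Y. torsion smul dorf nabla X Y = tau X Y" "parallel nabla I"
      "parallel nabla J" "parallel nabla K"
      unfolding gd by blast+
    show "nabla X Y = formula_connection smul dorf I J K X Y \<and>
          nabla X Y = formula_connection smul dorf J K I X Y \<and>
          nabla X Y = formula_connection smul dorf K I J X Y"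
      using good_results(2-4)[OF g] by simp
  qed
  show ?thesis using A B by blast
qed


end
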